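(* Let $(M,g)$ be an FRW space-time with comoving vector $u$, $H=\dot a/a$, mimetic field $\phi=t$ (so $u_k=-\nabla_k\phi$, $\chi:=\square\phi=-3H$), let $\gamma$ be a constant and $\zeta(t),V(t)$ smooth functions such that the tensor $$X_{kl}=g_{kl}\big[V+\gamma\nabla_p\chi\nabla^p\phi\big]+2\zeta\nabla_k\phi\nabla_l\phi-\gamma\big[\nabla_k\phi\nabla_l\chi+\nabla_k\chi\nabla_l\phi\big]$$ is divergence-free. Then $X_{kl}=2(\zeta+3\gamma\dot H)u_ku_l+(V+3\gamma\dot H)g_{kl}$, and the tensor $$\mathscr C_{kl}=2(\zeta+3\gamma\dot H)u_ku_l+\frac13(2\zeta-V+3\gamma\dot H)g_{kl}$$ is a Codazzi tensor with $X_{kl}=\mathscr C_{kl}-g_{kl}\mathscr C^r{}_r$. Hence the field equations $R_{kl}-\frac12Rg_{kl}=T_{kl}+X_{kl}$ are Cotton gravity equations in Codazzi form.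
   Context: FRW space-time: $ds^2=-dt^2+a(t)^2g^\star_{\mu\nu}(\mathbf x)dx^\mu dx^\nu$ with $g^\star$ a 3-dimensional Riemannian metric of constant curvature, $a>0$, $H=\dot a/a$, $u=\partial_t$ ($u_k=-\nabla_kt$), dot $=d/dt$, $\square=\nabla^k\nabla_k$. A symmetric tensor $\mathscr C$ is Codazzi if $\nabla_j\mathscr C_{kl}=\nabla_k\mathscr C_{jl}$. *)

theory Defs
  imports "HOL-Analysis.Analysis"
begin

(* Local coordinate calculus on an open set of real^'n.
   Tensors are given by their covariant components (all indices down). *)

definition pd :: "(real^'n \<Rightarrow> real) \<Rightarrow> 'n \<Rightarrow> real^'n \<Rightarrow> real" where
  "pd f i x = deriv (\<lambda>s. f (x + s *\<^sub>R axis i 1)) 0"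

fun pds :: "'n list \<Rightarrow> (real^'n \<Rightarrow> real) \<Rightarrow> real^'n \<Rightarrow> real" where
  "pds [] f = f"
| "pds (i # is) f = pd (pds is f) i"

definition smooth_on :: "(real^'n) set \<Rightarrow> (real^'n \<Rightarrow> real) \<Rightarrow> bool" where
  "smooth_on S f \<longleftrightarrow> (\<forall>is. pds is f differentiable_on S)"

definition smooth_on_real :: "real set \<Rightarrow> (real \<Rightarrow> real) \<Rightarrow> bool" where
  "smooth_on_real I f \<longleftrightarrow> (\<forall>n. (deriv ^^ n) f differentiable_on I)"

type_synonym 'n metric = "real^'n \<Rightarrow> 'n \<Rightarrow> 'n \<Rightarrow> real"

definition ginv :: "('n::finite) metric \<Rightarrow> real^'n \<Rightarrow> 'n \<Rightarrow> 'n \<Rightarrow> real" where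
  "ginv g x i j = matrix_inv (\<chi> a b. g x a b) $ i $ j"

definition christoffel :: "('n::finite) metric \<Rightarrow> real^'n \<Rightarrow> 'n \<Rightarrow> 'n \<Rightarrow> 'n \<Rightarrow> real" where
  "christoffel g x k i j = (1/2) * (\<Sum>l\<in>UNIV. ginv g x k l *
      (pd (\<lambda>y. g y j l) i x + pd (\<lambda>y. g y i l) j x - pd (\<lambda>y. g y i j) l x))"

definition grad :: "(real^'n \<Rightarrow> real) \<Rightarrow> real^'n \<Rightarrow> 'n \<Rightarrow> real" where
  "grad f x k = pd f k x"

definition cov1 :: "('n::finite) metric \<Rightarrow> (real^'n \<Rightarrow> 'n \<Rightarrow> real) \<Rightarrow> real^'n \<Rightarrow> 'n \<Rightarrow> 'n \<Rightarrow> real" where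
  "cov1 g w x j k = pd (\<lambda>y. w y k) j x - (\<Sum>m\<in>UNIV. christoffel g x m j k * w x m)"

definition cov2 :: "('n::finite) metric \<Rightarrow> (real^'n \<Rightarrow> 'n \<Rightarrow> 'n \<Rightarrow> real) \<Rightarrow> real^'n \<Rightarrow> 'n \<Rightarrow> 'n \<Rightarrow> 'n \<Rightarrow> real" where
  "cov2 g T x j k l = pd (\<lambda>y. T y k l) j x
      - (\<Sum>m\<in>UNIV. christoffel g x m j k * T x m l)
      - (\<Sum>m\<in>UNIV. christoffel g x m j l * T x k m)"

definition box :: "('n::finite) metric \<Rightarrow> (real^'n \<Rightarrow> real) \<Rightarrow> real^'n \<Rightarrow> real" where
  "box g f x = (\<Sum>j\<in>UNIV. \<Sum>k\<in>UNIV. ginv g x j k * cov1 g (grad f) x j k)"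

definition div2 :: "('n::finite) metric \<Rightarrow> (real^'n \<Rightarrow> 'n \<Rightarrow> 'n \<Rightarrow> real) \<Rightarrow> real^'n \<Rightarrow> 'n \<Rightarrow> real" where
  "div2 g T x l = (\<Sum>j\<in>UNIV. \<Sum>k\<in>UNIV. ginv g x j k * cov2 g T x j k l)"

definition trace2 :: "('n::finite) metric \<Rightarrow> (real^'n \<Rightarrow> 'n \<Rightarrow> 'n \<Rightarrow> real) \<Rightarrow> real^'n \<Rightarrow> real" where
  "trace2 g T x = (\<Sum>k\<in>UNIV. \<Sum>l\<in>UNIV. ginv g x k l * T x k l)"

definition codazzi_on :: "(real^'n) set \<Rightarrow> ('n::finite) metric \<Rightarrow> (real^'n \<Rightarrow> 'n \<Rightarrow> 'n \<Rightarrow> real) \<Rightarrow> bool" where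
  "codazzi_on S g C \<longleftrightarrow> (\<forall>x\<in>S. \<forall>k l. C x k l = C x l k) \<and>
     (\<forall>x\<in>S. \<forall>j k l. cov2 g C x j k l = cov2 g C x k j l)"

(* Riemann tensor R^r_{kij}, with R(d_i,d_j) d_k = sum_r R^r_{kij} d_r *)
definition riem :: "('n::finite) metric \<Rightarrow> real^'n \<Rightarrow> 'n \<Rightarrow> 'n \<Rightarrow> 'n \<Rightarrow> 'n \<Rightarrow> real" where
  "riem g x r k i j = pd (\<lambda>y. christoffel g y r j k) i x - pd (\<lambda>y. christoffel g y r i k) j x
     + (\<Sum>m\<in>UNIV. christoffel g x r i m * christoffel g x m j k
                 - christoffel g x r j m * christoffel g x m i k)"

definition ricci :: "('n::finite) metric \<Rightarrow> real^'n \<Rightarrow> 'n \<Rightarrow> 'n \<Rightarrow> real" where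
  "ricci g x j k = (\<Sum>i\<in>UNIV. riem g x i k i j)"

definition scal :: "('n::finite) metric \<Rightarrow> real^'n \<Rightarrow> real" where
  "scal g x = (\<Sum>j\<in>UNIV. \<Sum>k\<in>UNIV. ginv g x j k * ricci g x j k)"

definition einstein :: "('n::finite) metric \<Rightarrow> real^'n \<Rightarrow> 'n \<Rightarrow> 'n \<Rightarrow> real" where
  "einstein g x k l = ricci g x k l - scal g x / 2 * g x k l"

definition const_curv_riemannian :: "(real^'n) set \<Rightarrow> ('n::finite) metric \<Rightarrow> bool" where
  "const_curv_riemannian U h \<longleftrightarrow> open U \<and>
     (\<forall>i j. smooth_on U (\<lambda>y. h y i j)) \<and>
     (\<forall>y\<in>U. \<forall>i j. h y i j = h y j i) \<and>
     (\<forall>y\<in>U. \<forall>v::real^'n. v \<noteq> 0 \<longrightarrow> (\<Sum>i\<in>UNIV. \<Sum>j\<in>UNIV. h y i j * v$i * v$j) > 0) \<and>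
     (\<exists>K. \<forall>y\<in>U. \<forall>i j k l.
        (\<Sum>r\<in>UNIV. h y l r * riem h y r k i j) = K * (h y j k * h y i l - h y i k * h y j l))"

(* FRW space-time in comoving coordinates (t, x^1, x^2, x^3);
   spacetime index None = time, Some i = spatial index i *)
definition tcoord :: "real^(3 option) \<Rightarrow> real" where
  "tcoord x = x $ None"

definition spat :: "real^(3 option) \<Rightarrow> real^3" where
  "spat x = (\<chi> i. x $ Some i)"

definition frw_metric :: "(real \<Rightarrow> real) \<Rightarrow> 3 metric \<Rightarrow> (3 option) metric" where
  "frw_metric a gs x i j =
     (case (i, j) of (None, None) \<Rightarrow> -1
       | (Some p, Some q) \<Rightarrow> (a (tcoord x))\<^sup>2 * gs (spat x) p q
       | _ \<Rightarrow> 0)"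

definition frw_domain :: "real set \<Rightarrow> (real^3) set \<Rightarrow> (real^(3 option)) set" where
  "frw_domain I U = {x. tcoord x \<in> I \<and> spat x \<in> U}"

definition hubble :: "(real \<Rightarrow> real) \<Rightarrow> real \<Rightarrow> real" where
  "hubble a t = deriv a t / a t"

definition cotton_codazzi_form :: "(real^'n) set \<Rightarrow> ('n::finite) metric \<Rightarrow> (real^'n \<Rightarrow> 'n \<Rightarrow> 'n \<Rightarrow> real) \<Rightarrow> bool" where
  "cotton_codazzi_form S g T \<longleftrightarrow> (\<exists>C. codazzi_on S g C \<and>
     (\<forall>x\<in>S. \<forall>k l. einstein g x k l = T x k l + C x k l - g x k l * trace2 g C x))"

end

theory Submission imports Defs begin

definition dl :: "(real^'n \<Rightarrow> real) \<Rightarrow> 'n \<Rightarrow> real^'n \<Rightarrow> real \<Rightarrow> bool" where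
  "dl f i x D \<longleftrightarrow> ((\<lambda>s. f (x + s *\<^sub>R axis i 1)) has_real_derivative D) (at 0)"

lemma pd_dl: "dl f i x D \<Longrightarrow> pd f i x = D"
  unfolding dl_def pd_def by (rule DERIV_imp_deriv)

lemma dl_const: "dl (\<lambda>y. c) i x 0"
  unfolding dl_def by simp

lemma dl_add: "dl f i x D \<Longrightarrow> dl g i x E \<Longrightarrow> dl (\<lambda>y. f y + g y) i x (D + E)"
  unfolding dl_def by (rule DERIV_add)

lemma dl_mult: "dl f i x D \<Longrightarrow> dl g i x E \<Longrightarrow> dl (\<lambda>y. f y * g y) i x (D * g x + f x * E)"
  unfolding dl_def by (drule (1) DERIV_mult) (simp add: mult.commute)

lemma dl_pd: "(\<lambda>s. f (x + s *\<^sub>R axis i 1)) differentiable at 0 \<Longrightarrow> dl f i x (pd f i x)"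
  unfolding dl_def pd_def by (simp add: DERIV_deriv_iff_real_differentiable)

lemma line_eventually:
  assumes "open S" "x \<in> S"
  shows "\<forall>\<^sub>F s in nhds 0. x + s *\<^sub>R axis i 1 \<in> (S::(real^'n) set)"
proof -
  obtain e where e: "e > 0" "ball x e \<subseteq> S" using assms open_contains_ball by blast
  show ?thesis unfolding eventually_nhds_metric
  proof (intro exI conjI allI impI)
    show "e > 0" by fact
    fix s :: real assume "dist s 0 < e"
    then have "dist x (x + s *\<^sub>R axis i 1) < e" by (simp add: dist_norm norm_axis_1)
    then show "x + s *\<^sub>R axis i 1 \<in> S" using e by auto
  qed
qed

lemma pd_cong:
  assumes "open S" "x \<in> S" "\<forall>y\<in>S. f y = f' y"
  shows "pd f i x = pd f' i x"
  unfolding pd_def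
  by (rule deriv_cong_ev) (use line_eventually[OF assms(1,2), of i] assms(3) in \<open>auto elim: eventually_mono\<close>)

lemma dl_cong:
  assumes "open S" "x \<in> S" "\<forall>y\<in>S. f y = f' y" "dl f i x D"
  shows "dl f' i x D"
proof -
  have "((\<lambda>s. f (x + s *\<^sub>R axis i 1)) has_real_derivative D) (at 0) =
        ((\<lambda>s. f' (x + s *\<^sub>R axis i 1)) has_real_derivative D) (at 0)"
    by (rule DERIV_cong_ev) (use line_eventually[OF assms(1,2), of i] assms(3) in \<open>auto elim: eventually_mono\<close>)
  then show ?thesis using assms(4) unfolding dl_def by simp
qed

lemma pd_const[simp]: "pd (\<lambda>y. c) i x = 0"
  using pd_dl[OF dl_const] .

definition dn :: "'a option \<Rightarrow> real" where "dn k = (if k = None then 1 else 0)"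

lemma dn_simps[simp]: "dn None = 1" "dn (Some p) = 0" by (simp_all add: dn_def)

lemma tcoord_line: "tcoord (x + s *\<^sub>R axis i 1) = tcoord x + (if i = None then s else 0)"
  unfolding tcoord_def axis_def by auto

lemma spat_line_None: "spat (x + s *\<^sub>R axis None 1) = spat x"
  unfolding spat_def axis_def by (simp add: vec_eq_iff)

lemma spat_line_Some: "spat (x + s *\<^sub>R axis (Some p) 1) = spat x + s *\<^sub>R axis p 1"
  unfolding spat_def axis_def by (simp add: vec_eq_iff)

lemma dl_time:
  assumes "(F has_real_derivative F') (at (tcoord x))"
  shows "dl (\<lambda>y. F (tcoord y)) i x (F' * dn i)"
proof (cases "i = None")
  case True
  have "((\<lambda>s. F (s + tcoord x)) has_real_derivative F') (at 0)"
    using assms DERIV_shift[of F F' 0 "tcoord x"] by simp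
  then show ?thesis using True unfolding dl_def tcoord_line by (simp add: add.commute dn_def)
next
  case False
  then have "(\<lambda>s. F (tcoord x + (if i = None then s else 0))) = (\<lambda>s. F (tcoord x))" by auto
  then show ?thesis using False unfolding dl_def tcoord_line dn_def by (simp only: if_False) simp
qed

lemma grad_tcoord[simp]: "grad tcoord x k = dn k"
proof -
  have "dl tcoord k x (dn k)"
    using dl_time[of "\<lambda>t. t" 1 x k] by simp
  then show ?thesis unfolding grad_def by (rule pd_dl)
qed

lemma sum_opt: "(\<Sum>i\<in>(UNIV::'a::finite option set). f i) = f None + (\<Sum>p\<in>UNIV. f (Some p))"
proof -
  have "sum f (insert None (Some ` UNIV)) = f None + (\<Sum>p\<in>UNIV. f (Some p))"
    by (simp add: sum.reindex)
  then show ?thesis by (simp only: UNIV_option_conv[symmetric])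
qed

lemma open_frw: "open I \<Longrightarrow> open U \<Longrightarrow> open (frw_domain I U)"
proof -
  assume "open I" "open U"
  have "frw_domain I U = tcoord -` I \<inter> spat -` U" unfolding frw_domain_def by auto
  moreover have "open (tcoord -` I)" unfolding tcoord_def using open_vimage_vec_nth[OF \<open>open I\<close>] .
  moreover have "open (spat -` U)"
    unfolding spat_def by (rule open_vimage[OF \<open>open U\<close>]) (intro continuous_on_vec_lambda continuous_intros)
  ultimately show ?thesis by auto
qed

lemma sum_dn[simp]: "(\<Sum>l\<in>UNIV. dn l * f l) = f (None::'a::finite option)"
  and sum_dn'[simp]: "(\<Sum>l\<in>UNIV. f l * dn l) = f (None::'a::finite option)"
  by (simp_all add: sum_opt)

lemma sum_ifNone[simp]: "(\<Sum>l\<in>UNIV. (if l = None then c else 0) * f l :: real) = c * f (None::'a::finite option)"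
  by (simp add: sum_opt)

lemma sum_ifNone'[simp]: "(\<Sum>l\<in>UNIV. f l * (if l = None then c else 0) :: real) = f (None::'a::finite option) * c"
  by (simp add: sum_opt)

lemma dl_spat_None: "dl (\<lambda>y. f (spat y)) None x 0"
  unfolding dl_def spat_line_None by simp

lemma fm_NN[simp]: "frw_metric a gs x None None = -1"
  and fm_NS[simp]: "frw_metric a gs x None (Some q) = 0"
  and fm_SN[simp]: "frw_metric a gs x (Some p) None = 0"
  and fm_SS[simp]: "frw_metric a gs x (Some p) (Some q) = (a (tcoord x))\<^sup>2 * gs (spat x) p q"
  by (simp_all add: frw_metric_def)

lemma fm_col: "frw_metric a gs x k None = - dn k"
  and fm_row: "frw_metric a gs x None k = - dn k"
  by (cases k; simp)+

lemma smooth_real_diff: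
  assumes "smooth_on_real I f" "open I" "t \<in> I"
  shows "f differentiable at t" "deriv f differentiable at t" "deriv (deriv f) differentiable at t"
proof -
  have *: "(deriv ^^ n) f differentiable at t" for n
  proof -
    have "(deriv ^^ n) f differentiable_on I" using assms(1) unfolding smooth_on_real_def by blast
    then have "(deriv ^^ n) f differentiable (at t within I)" using assms(3) unfolding differentiable_on_def by blast
    then show ?thesis using at_within_open[OF assms(3,2)] by simp
  qed
  show "f differentiable at t" using *[of 0] by simp
  show "deriv f differentiable at t" using *[of 1] by simp
  show "deriv (deriv f) differentiable at t" using *[of 2] by (simp add: numeral_2_eq_2)
qed

locale frwL =
  fixes I :: "real set" and U :: "(real^3) set" and a :: "real \<Rightarrow> real" and gs :: "3 metric"
  assumes I_open: "open I" and a_pos: "\<forall>t\<in>I. a t > 0" and a_smooth: "smooth_on_real I a"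
    and gs: "const_curv_riemannian U gs"
begin

abbreviation "gm \<equiv> frw_metric a gs"
abbreviation "Om \<equiv> frw_domain I U"

lemma gs_parts: "open U \<and> (\<forall>i j. smooth_on U (\<lambda>y. gs y i j)) \<and> (\<forall>y\<in>U. \<forall>i j. gs y i j = gs y j i) \<and>
     (\<forall>y\<in>U. \<forall>v::real^3. v \<noteq> 0 \<longrightarrow> (\<Sum>i\<in>UNIV. \<Sum>j\<in>UNIV. gs y i j * v$i * v$j) > 0)"
  using gs unfolding const_curv_riemannian_def by (elim conjE) (intro conjI; assumption)

lemma U_open: "open U" using gs_parts by (rule conjunct1)
lemma gs_sym: "y \<in> U \<Longrightarrow> gs y i j = gs y j i"
proof -
  assume y: "y \<in> U"
  have "\<forall>y\<in>U. \<forall>i j. gs y i j = gs y j i" using gs_parts by (elim conjE)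
  then show ?thesis using y by blast
qed
lemma gs_pos: "y \<in> U \<Longrightarrow> v \<noteq> 0 \<Longrightarrow> (\<Sum>i\<in>UNIV. \<Sum>j\<in>UNIV. gs y i j * v$i * v$j) > 0"
proof -
  assume y: "y \<in> U" "v \<noteq> 0"
  have "\<forall>y\<in>U. \<forall>v::real^3. v \<noteq> 0 \<longrightarrow> (\<Sum>i\<in>UNIV. \<Sum>j\<in>UNIV. gs y i j * v$i * v$j) > 0"
    using gs_parts by (elim conjE)
  then show ?thesis using y by blast
qed
lemma gs_diff: "y \<in> U \<Longrightarrow> (\<lambda>z. gs z i j) differentiable at y"
proof -
  assume y: "y \<in> U"
  have "\<forall>i j. smooth_on U (\<lambda>y. gs y i j)" using gs_parts by (elim conjE)
  then have "pds [] (\<lambda>z. gs z i j) differentiable_on U" unfolding smooth_on_def by blast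
  then have "(\<lambda>z. gs z i j) differentiable (at y within U)" using y unfolding differentiable_on_def by simp
  then show ?thesis using at_within_open[OF y U_open] by simp
qed

lemma Om_open: "open Om" using open_frw[OF I_open U_open] .
lemma Om_t: "x \<in> Om \<Longrightarrow> tcoord x \<in> I" and Om_s: "x \<in> Om \<Longrightarrow> spat x \<in> U"
  unfolding frw_domain_def by auto

lemma a_ne: "x \<in> Om \<Longrightarrow> a (tcoord x) \<noteq> 0"
proof -
  assume "x \<in> Om"
  then have "a (tcoord x) > 0" using a_pos Om_t by blast
  then show ?thesis by simp
qed

lemma gm_sym: "x \<in> Om \<Longrightarrow> gm x k l = gm x l k"
  using gs_sym[OF Om_s] by (cases k; cases l; simp)

lemma a_deriv: "t \<in> I \<Longrightarrow> (a has_real_derivative deriv a t) (at t)"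
  by (simp add: DERIV_deriv_iff_real_differentiable smooth_real_diff(1)[OF a_smooth I_open])

lemma gm_inv:
  assumes x: "x \<in> Om"
  shows "(\<chi> i j. gm x i j) ** matrix_inv (\<chi> i j. gm x i j) = mat 1 \<and>
         matrix_inv (\<chi> i j. gm x i j) ** (\<chi> i j. gm x i j) = mat 1"
proof -
  define M where "M = (\<chi> i j. gm x i j)"
  have ker: "\<forall>v. M *v v = 0 \<longrightarrow> v = 0"
  proof (intro allI impI)
    fix v assume Mv: "M *v v = 0"
    have row: "(\<Sum>j\<in>UNIV. gm x i j * v$j) = 0" for i
    proof -
      have "(M *v v) $ i = 0" using Mv by simp
      then show ?thesis unfolding M_def matrix_vector_mult_def by simp
    qed
    have v0: "v$None = 0"
    proof -
      have "(\<Sum>j\<in>UNIV. gm x None j * v$j) = gm x None None * v$None + (\<Sum>p\<in>UNIV. gm x None (Some p) * v$Some p)"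
        by (rule sum_opt)
      then show ?thesis using row[of None] by simp
    qed
    define w where "w = (\<chi> p. v$Some p)"
    have rw: "(\<Sum>p\<in>UNIV. gs (spat x) q p * w$p) = 0" for q
    proof -
      have "(\<Sum>j\<in>UNIV. gm x (Some q) j * v$j) = gm x (Some q) None * v$None + (\<Sum>p\<in>UNIV. gm x (Some q) (Some p) * v$Some p)"
        by (rule sum_opt)
      then have "(\<Sum>p\<in>UNIV. (a (tcoord x))\<^sup>2 * (gs (spat x) q p * w$p)) = 0"
        using row[of "Some q"] unfolding w_def by (simp add: mult.assoc)
      then have "(a (tcoord x))\<^sup>2 * (\<Sum>p\<in>UNIV. gs (spat x) q p * w$p) = 0"
        by (simp only: sum_distrib_left)
      then show ?thesis using a_ne[OF x] by simp
    qed
    have "(\<Sum>i\<in>UNIV. \<Sum>j\<in>UNIV. gs (spat x) i j * w$i * w$j) = 0"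
    proof -
      have "(\<Sum>i\<in>UNIV. \<Sum>j\<in>UNIV. gs (spat x) i j * w$i * w$j)
          = (\<Sum>i\<in>UNIV. w$i * (\<Sum>j\<in>UNIV. gs (spat x) i j * w$j))"
        by (simp add: sum_distrib_left mult.commute mult.left_commute)
      also have "\<dots> = 0" using rw by simp
      finally show ?thesis .
    qed
    then have "w = 0" using gs_pos[OF Om_s[OF x], of w] by fastforce
    then have vS: "v$Some p = 0" for p 
    proof -
      have "w$p = 0" using \<open>w = 0\<close> by simp
      then show ?thesis unfolding w_def by simp
    qed
    show "v = 0"
      unfolding vec_eq_iff
    proof
      fix i show "v$i = 0$i" using v0 vS by (cases i) auto
    qed
  qed
  then have "\<exists>B. B ** M = mat 1" by (simp only: matrix_left_invertible_ker)
  then obtain B where B: "B ** M = mat 1" by blast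
  then have "M ** B = mat 1" using matrix_left_right_inverse[of M B] by simp
  then have "M ** B = mat 1 \<and> B ** M = mat 1" using B by simp
  then have "M ** matrix_inv M = mat 1 \<and> matrix_inv M ** M = mat 1"
    unfolding matrix_inv_def by (rule someI)
  then show ?thesis unfolding M_def .
qed

lemma ginv_right: "x \<in> Om \<Longrightarrow> (\<Sum>m\<in>UNIV. gm x l m * ginv gm x m n) = (if l = n then 1 else 0)"
proof -
  assume x: "x \<in> Om"
  have "((\<chi> i j. gm x i j) ** matrix_inv (\<chi> i j. gm x i j)) $ l $ n = (mat 1 :: real^3 option^3 option) $ l $ n"
    by (simp only: conjunct1[OF gm_inv[OF x]])
  then show ?thesis unfolding matrix_matrix_mult_def mat_def ginv_def by simp
qed

lemma ginv_left: "x \<in> Om \<Longrightarrow> (\<Sum>m\<in>UNIV. ginv gm x l m * gm x m n) = (if l = n then 1 else 0)"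
proof -
  assume x: "x \<in> Om"
  have "(matrix_inv (\<chi> i j. gm x i j) ** (\<chi> i j. gm x i j)) $ l $ n = (mat 1 :: real^3 option^3 option) $ l $ n"
    by (simp only: conjunct2[OF gm_inv[OF x]])
  then show ?thesis unfolding matrix_matrix_mult_def mat_def ginv_def by simp
qed

lemma ginv_col: "x \<in> Om \<Longrightarrow> ginv gm x l None = - dn l"
  using ginv_left[of x l None] by (cases l) (simp_all add: fm_col sum_negf)

lemma ginv_row: "x \<in> Om \<Longrightarrow> ginv gm x None n = - dn n"
  using ginv_right[of x None n] by (cases n) (simp_all add: fm_row sum_negf)

lemma trace_g: "x \<in> Om \<Longrightarrow> (\<Sum>j\<in>UNIV. \<Sum>k\<in>UNIV. ginv gm x j k * gm x j k) = 4"
proof -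
  assume x: "x \<in> Om"
  have "(\<Sum>j\<in>UNIV. \<Sum>k\<in>UNIV. ginv gm x j k * gm x j k) = (\<Sum>j\<in>(UNIV::3 option set). 1)"
  proof (rule sum.cong[OF refl])
    fix j
    have "(\<Sum>k\<in>UNIV. ginv gm x j k * gm x j k) = (\<Sum>k\<in>UNIV. ginv gm x j k * gm x k j)"
      using gm_sym[OF x, of j] by metis
    also have "\<dots> = 1" using ginv_left[OF x, of j j] by simp
    finally show "(\<Sum>k\<in>UNIV. ginv gm x j k * gm x j k) = 1" .
  qed
  also have "\<dots> = 4" by (simp add: card_option)
  finally show ?thesis .
qed


lemma sq_deriv: "t \<in> I \<Longrightarrow> ((\<lambda>t. (a t)\<^sup>2) has_real_derivative 2 * a t * deriv a t) (at t)"
  using DERIV_power[OF a_deriv, of t 2] by (simp add: mult_ac)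

lemma dl_g_None:
  assumes x: "x \<in> Om"
  shows "dl (\<lambda>y. gm y k l) None x
     (case k of Some p \<Rightarrow> (case l of Some q \<Rightarrow> 2 * a (tcoord x) * deriv a (tcoord x) * gs (spat x) p q | None \<Rightarrow> 0) | None \<Rightarrow> 0)"
proof (cases k)
  case None
  then show ?thesis using dl_const[of "- dn l" None x] by (simp add: fm_row)
next
  case (Some p)
  show ?thesis
  proof (cases l)
    case None
    then show ?thesis using Some dl_const[of "- dn k" None x] by (simp add: fm_col)
  next
    case (Some q)
    have "dl (\<lambda>y. (a (tcoord y))\<^sup>2 * gs (spat y) p q) None x
           ((2 * a (tcoord x) * deriv a (tcoord x)) * dn None * gs (spat x) p q + (a (tcoord x))\<^sup>2 * 0)"
      using dl_mult[OF dl_time[OF sq_deriv[OF Om_t[OF x]]] dl_spat_None[of "\<lambda>z. gs z p q"]] by simp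
    then show ?thesis using \<open>k = Some p\<close> Some by simp
  qed
qed

lemma pd_g_None: "x \<in> Om \<Longrightarrow> pd (\<lambda>y. gm y k l) None x =
     (case k of Some p \<Rightarrow> (case l of Some q \<Rightarrow> 2 * a (tcoord x) * deriv a (tcoord x) * gs (spat x) p q | None \<Rightarrow> 0) | None \<Rightarrow> 0)"
  by (rule pd_dl[OF dl_g_None])

lemma dl_g_ex:
  assumes x: "x \<in> Om"
  shows "\<exists>D. dl (\<lambda>y. gm y k l) j x D"
proof (cases j)
  case None
  then show ?thesis using dl_g_None[OF x] by blast
next
  case (Some r)
  show ?thesis
  proof (cases k)
    case None
    then show ?thesis using dl_const[of "- dn l" j x] by (auto simp add: fm_row)
  next
    case (Some p)
    show ?thesis
    proof (cases l)
      case None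
      then show ?thesis using dl_const[of "- dn k" j x] \<open>k = Some p\<close> by (auto simp add: fm_col)
    next
      case (Some q)
      have lin: "(\<lambda>s. spat x + s *\<^sub>R axis r 1) differentiable at 0"
        by (intro derivative_intros)
      have "(\<lambda>z. gs z p q) \<circ> (\<lambda>s. spat x + s *\<^sub>R axis r 1) differentiable at 0"
        by (rule differentiable_chain_at[OF lin]) (simp add: gs_diff Om_s[OF x])
      then have "((\<lambda>s. gs (spat x + s *\<^sub>R axis r 1) p q) has_real_derivative
                  deriv ((\<lambda>z. gs z p q) \<circ> (\<lambda>s. spat x + s *\<^sub>R axis r 1)) 0) (at 0)"
        unfolding DERIV_deriv_iff_real_differentiable[symmetric] by (simp add: o_def)
      then have "((\<lambda>s. (a (tcoord x))\<^sup>2 * gs (spat x + s *\<^sub>R axis r 1) p q) has_real_derivative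
                  (a (tcoord x))\<^sup>2 * deriv ((\<lambda>z. gs z p q) \<circ> (\<lambda>s. spat x + s *\<^sub>R axis r 1)) 0) (at 0)"
        by (rule DERIV_cmult)
      then show ?thesis using \<open>j = Some r\<close> \<open>k = Some p\<close> Some
        unfolding dl_def by (auto simp add: tcoord_line spat_line_Some)
    qed
  qed
qed

lemma dl_g: "x \<in> Om \<Longrightarrow> dl (\<lambda>y. gm y k l) j x (pd (\<lambda>y. gm y k l) j x)"
  using dl_g_ex pd_dl by metis

lemma pd_g_sym: "x \<in> Om \<Longrightarrow> pd (\<lambda>y. gm y k l) j x = pd (\<lambda>y. gm y l k) j x"
  by (rule pd_cong[OF Om_open]) (auto intro: gm_sym)

lemma chr0:
  assumes x: "x \<in> Om"
  shows "christoffel gm x None j k = hubble a (tcoord x) * (gm x j k + dn j * dn k)"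
proof -
  have "christoffel gm x None j k = pd (\<lambda>y. gm y j k) None x / 2"
    unfolding christoffel_def using ginv_row[OF x] by (simp add: fm_col sum_negf)
  also have "\<dots> = hubble a (tcoord x) * (gm x j k + dn j * dn k)"
    using a_ne[OF x] unfolding pd_g_None[OF x] hubble_def
    by (cases j; cases k) (simp_all add: field_simps power2_eq_square)
  finally show ?thesis .
qed

lemma chr_low:
  assumes x: "x \<in> Om"
  shows "(\<Sum>m\<in>UNIV. christoffel gm x m j k * gm x m l) =
     (pd (\<lambda>y. gm y k l) j x + pd (\<lambda>y. gm y j l) k x - pd (\<lambda>y. gm y j k) l x) / 2"
proof -
  define D where "D n = pd (\<lambda>y. gm y k n) j x + pd (\<lambda>y. gm y j n) k x - pd (\<lambda>y. gm y j k) n x" for n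
  have "(\<Sum>m\<in>UNIV. christoffel gm x m j k * gm x m l) =
        (\<Sum>m\<in>UNIV. \<Sum>n\<in>UNIV. (D n / 2) * (gm x l m * ginv gm x m n))"
  proof (rule sum.cong[OF refl])
    fix m
    have "gm x m l = gm x l m" by (rule gm_sym[OF x])
    then show "christoffel gm x m j k * gm x m l = (\<Sum>n\<in>UNIV. (D n / 2) * (gm x l m * ginv gm x m n))"
      unfolding christoffel_def D_def by (simp add: sum_distrib_left sum_distrib_right mult_ac)
  qed
  also have "\<dots> = (\<Sum>n\<in>UNIV. (D n / 2) * (\<Sum>m\<in>UNIV. gm x l m * ginv gm x m n))"
    by (subst sum.swap) (simp add: sum_distrib_left)
  also have "\<dots> = (\<Sum>n\<in>UNIV. if n = l then D n / 2 else 0)"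
    by (rule sum.cong[OF refl]) (simp add: ginv_right[OF x, of l])
  also have "\<dots> = D l / 2" by simp
  finally show ?thesis unfolding D_def .
qed

lemma sum_dn2[simp]: fixes f :: "'a::finite option \<Rightarrow> 'b::finite option \<Rightarrow> real"
  shows "(\<Sum>j\<in>UNIV. \<Sum>k\<in>UNIV. f j k * (dn j * dn k)) = f None None"
proof -
  have "(\<Sum>k\<in>UNIV. f j k * (dn j * dn k)) = dn j * f j None" for j
    by (cases j) (simp_all add: sum_opt)
  then show ?thesis by simp
qed

lemma box_val:
  assumes y: "y \<in> Om"
  shows "box gm tcoord y = -3 * hubble a (tcoord y)"
proof -
  let ?H = "hubble a (tcoord y)"
  have cov: "cov1 gm (grad tcoord) y j k = - (?H * (gm y j k + dn j * dn k))" for j k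
    unfolding cov1_def using chr0[OF y] by simp
  have "box gm tcoord y = (\<Sum>j\<in>UNIV. \<Sum>k\<in>UNIV. (- ?H) * (ginv gm y j k * gm y j k) + (- ?H) * (ginv gm y j k * (dn j * dn k)))"
    unfolding box_def cov by (simp add: algebra_simps)
  also have "\<dots> = (- ?H) * (\<Sum>j\<in>UNIV. \<Sum>k\<in>UNIV. ginv gm y j k * gm y j k) + (- ?H) * (\<Sum>j\<in>UNIV. \<Sum>k\<in>UNIV. ginv gm y j k * (dn j * dn k))"
    by (simp only: sum.distrib sum_distrib_left)
  also have "\<dots> = -3 * ?H" using trace_g[OF y] ginv_row[OF y] by simp
  finally show ?thesis .
qed


lemma H_ext: "hubble a = (\<lambda>t. deriv a t / a t)"
  by (rule ext) (simp add: hubble_def)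

lemma H_DERIV:
  assumes t: "t \<in> I"
  shows "(hubble a has_real_derivative
           (deriv (deriv a) t * a t - deriv a t * deriv a t) / (a t * a t)) (at t)"
proof -
  have d1: "(deriv a has_real_derivative deriv (deriv a) t) (at t)"
    using smooth_real_diff(2)[OF a_smooth I_open t] DERIV_deriv_iff_real_differentiable by blast
  have "a t \<noteq> 0" using a_pos t by force
  then show ?thesis unfolding H_ext using DERIV_divide[OF d1 a_deriv[OF t]] by simp
qed

lemma H_deriv: "t \<in> I \<Longrightarrow> (hubble a has_real_derivative deriv (hubble a) t) (at t)"
  using H_DERIV DERIV_imp_deriv by metis

lemma Hd_deriv:
  assumes t: "t \<in> I"
  shows "(deriv (hubble a) has_real_derivative deriv (deriv (hubble a)) t) (at t)"
proof -
  define E where "E s = (deriv (deriv a) s * a s - deriv a s * deriv a s) / (a s * a s)" for s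
  have d1: "(deriv a has_real_derivative deriv (deriv a) t) (at t)"
    using smooth_real_diff(2)[OF a_smooth I_open t] DERIV_deriv_iff_real_differentiable by blast
  have d2: "(deriv (deriv a) has_real_derivative deriv (deriv (deriv a)) t) (at t)"
    using smooth_real_diff(3)[OF a_smooth I_open t] DERIV_deriv_iff_real_differentiable by blast
  have d0: "(a has_real_derivative deriv a t) (at t)" by (rule a_deriv[OF t])
  have "a t \<noteq> 0" using a_pos t by force
  then have "a t * a t \<noteq> 0" by simp
  note DD = DERIV_divide[OF DERIV_diff[OF DERIV_mult[OF d2 d0] DERIV_mult[OF d1 d1]] DERIV_mult[OF d0 d0] this]
  have "\<exists>D. (E has_real_derivative D) (at t)"
    unfolding E_def using DD by blast
  then obtain D where D: "(E has_real_derivative D) (at t)" by blast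
  have ev: "\<forall>\<^sub>F s in nhds t. E s = deriv (hubble a) s"
    using eventually_nhds_in_open[OF I_open t]
    by (rule eventually_mono) (simp add: E_def DERIV_imp_deriv[OF H_DERIV])
  have "(deriv (hubble a) has_real_derivative D) (at t)"
    using D DERIV_cong_ev[OF refl ev refl] by simp
  then show ?thesis using DERIV_imp_deriv by metis
qed

lemma smooth_deriv: "smooth_on_real I f \<Longrightarrow> t \<in> I \<Longrightarrow> (f has_real_derivative deriv f t) (at t)"
  using smooth_real_diff(1)[OF _ I_open] DERIV_deriv_iff_real_differentiable by blast

lemma cov2_form:
  assumes x: "x \<in> Om"
    and T: "\<forall>y\<in>Om. \<forall>k l. T y k l = A (tcoord y) * (dn k * dn l) + B (tcoord y) * gm y k l"
    and dA: "(A has_real_derivative A') (at (tcoord x))"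
    and dB: "(B has_real_derivative B') (at (tcoord x))"
  shows "cov2 gm T x j k l = A' * dn j * dn k * dn l + B' * dn j * gm x k l
      - A (tcoord x) * hubble a (tcoord x) * ((gm x j k + dn j * dn k) * dn l + dn k * (gm x j l + dn j * dn l))"
proof -
  let ?t = "tcoord x"
  have P: "pd (\<lambda>y. T y k l) j x = A' * dn j * (dn k * dn l) + (B' * dn j * gm x k l + B ?t * pd (\<lambda>y. gm y k l) j x)"
  proof -
    have "pd (\<lambda>y. T y k l) j x = pd (\<lambda>y. A (tcoord y) * (dn k * dn l) + B (tcoord y) * gm y k l) j x"
      by (rule pd_cong[OF Om_open x]) (use T in auto)
    also have "\<dots> = A' * dn j * (dn k * dn l) + A ?t * 0 + (B' * dn j * gm x k l + B ?t * pd (\<lambda>y. gm y k l) j x)"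
      by (rule pd_dl[OF dl_add[OF dl_mult[OF dl_time[OF dA] dl_const] dl_mult[OF dl_time[OF dB] dl_g[OF x]]]])
    finally show ?thesis by simp
  qed
  have Q: "(\<Sum>m\<in>UNIV. christoffel gm x m j k * T x m l) =
      A ?t * dn l * christoffel gm x None j k + B ?t * (\<Sum>m\<in>UNIV. christoffel gm x m j k * gm x m l)"
  proof -
    have "(\<Sum>m\<in>UNIV. christoffel gm x m j k * T x m l) =
      (\<Sum>m\<in>UNIV. (A ?t * dn l) * (christoffel gm x m j k * dn m) + B ?t * (christoffel gm x m j k * gm x m l))"
      by (rule sum.cong[OF refl]) (simp add: T x algebra_simps)
    also have "\<dots> = (A ?t * dn l) * (\<Sum>m\<in>UNIV. christoffel gm x m j k * dn m) + B ?t * (\<Sum>m\<in>UNIV. christoffel gm x m j k * gm x m l)"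
      by (simp only: sum.distrib sum_distrib_left)
    finally show ?thesis by simp
  qed
  have R: "(\<Sum>m\<in>UNIV. christoffel gm x m j l * T x k m) =
      A ?t * dn k * christoffel gm x None j l + B ?t * (\<Sum>m\<in>UNIV. christoffel gm x m j l * gm x m k)"
  proof -
    have "(\<Sum>m\<in>UNIV. christoffel gm x m j l * T x k m) =
      (\<Sum>m\<in>UNIV. (A ?t * dn k) * (christoffel gm x m j l * dn m) + B ?t * (christoffel gm x m j l * gm x m k))"
      by (rule sum.cong[OF refl]) (simp add: T x algebra_simps gm_sym[OF x, of k])
    also have "\<dots> = (A ?t * dn k) * (\<Sum>m\<in>UNIV. christoffel gm x m j l * dn m) + B ?t * (\<Sum>m\<in>UNIV. christoffel gm x m j l * gm x m k)"
      by (simp only: sum.distrib sum_distrib_left)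
    finally show ?thesis by simp
  qed
  have S: "pd (\<lambda>y. gm y l k) j x = pd (\<lambda>y. gm y k l) j x" by (rule pd_g_sym[OF x])
  show ?thesis
    unfolding cov2_def P Q R chr0[OF x] chr_low[OF x] S
    by (simp add: field_simps)
qed

lemma div_form:
  assumes x: "x \<in> Om"
    and T: "\<forall>y\<in>Om. \<forall>k l. T y k l = A (tcoord y) * (dn k * dn l) + B (tcoord y) * gm y k l"
    and dA: "(A has_real_derivative A') (at (tcoord x))"
    and dB: "(B has_real_derivative B') (at (tcoord x))"
  shows "div2 gm T x None = - A' + B' - 3 * A (tcoord x) * hubble a (tcoord x)"
proof -
  let ?c = "A' - B' - A (tcoord x) * hubble a (tcoord x)"
  let ?d = "A (tcoord x) * hubble a (tcoord x)"
  have c: "cov2 gm T x j k None = ?c * (dn j * dn k) - ?d * gm x j k" for j k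
    unfolding cov2_form[OF x T dA dB] by (cases j; cases k) (simp_all add: algebra_simps)
  have "div2 gm T x None = (\<Sum>j\<in>UNIV. \<Sum>k\<in>UNIV. ?c * (ginv gm x j k * (dn j * dn k)) + (- ?d) * (ginv gm x j k * gm x j k))"
    unfolding div2_def c by (simp add: algebra_simps)
  also have "\<dots> = ?c * (\<Sum>j\<in>UNIV. \<Sum>k\<in>UNIV. ginv gm x j k * (dn j * dn k)) + (- ?d) * (\<Sum>j\<in>UNIV. \<Sum>k\<in>UNIV. ginv gm x j k * gm x j k)"
    by (simp only: sum.distrib sum_distrib_left)
  also have "\<dots> = - A' + B' - 3 * ?d" unfolding sum_dn2 trace_g[OF x] ginv_row[OF x] by (simp add: algebra_simps)
  finally show ?thesis by simp
qed

lemma trace_form: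
  assumes x: "x \<in> Om"
    and T: "\<forall>k l. T x k l = A * (dn k * dn l) + B * gm x k l"
  shows "trace2 gm T x = - A + 4 * B"
proof -
  have "trace2 gm T x = (\<Sum>j\<in>UNIV. \<Sum>k\<in>UNIV. A * (ginv gm x j k * (dn j * dn k)) + B * (ginv gm x j k * gm x j k))"
    unfolding trace2_def by (simp add: T algebra_simps)
  also have "\<dots> = A * (\<Sum>j\<in>UNIV. \<Sum>k\<in>UNIV. ginv gm x j k * (dn j * dn k)) + B * (\<Sum>j\<in>UNIV. \<Sum>k\<in>UNIV. ginv gm x j k * gm x j k)"
    by (simp only: sum.distrib sum_distrib_left)
  also have "\<dots> = - A + 4 * B" unfolding sum_dn2 trace_g[OF x] ginv_row[OF x] by simp
  finally show ?thesis .
qed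

end

theorem mainTheorem11:
  fixes I :: "real set" and U :: "(real^3) set"
    and a zeta V :: "real \<Rightarrow> real" and gs :: "3 metric" and gamma :: real
  defines "g \<equiv> frw_metric a gs"
    and "\<Omega> \<equiv> frw_domain I U"
    and "H \<equiv> hubble a"
    and "u \<equiv> (\<lambda>x k. - grad tcoord x k)"
    and "phi \<equiv> tcoord"
    and "chi \<equiv> box (frw_metric a gs) tcoord"
    and "X \<equiv> (\<lambda>x k l.
            frw_metric a gs x k l * (V (tcoord x) + gamma *
               (\<Sum>p\<in>UNIV. \<Sum>q\<in>UNIV. ginv (frw_metric a gs) x p q
                   * grad (box (frw_metric a gs) tcoord) x p * grad tcoord x q))
          + 2 * zeta (tcoord x) * grad tcoord x k * grad tcoord x l
          - gamma * (grad tcoord x k * grad (box (frw_metric a gs) tcoord) x l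
                     + grad (box (frw_metric a gs) tcoord) x k * grad tcoord x l))"
    and "C \<equiv> (\<lambda>x k l.
            2 * (zeta (tcoord x) + 3 * gamma * deriv (hubble a) (tcoord x))
              * (- grad tcoord x k) * (- grad tcoord x l)
          + (1/3) * (2 * zeta (tcoord x) - V (tcoord x) + 3 * gamma * deriv (hubble a) (tcoord x))
              * frw_metric a gs x k l)"
  assumes I: "open I" "is_interval I"
    and a_pos: "\<forall>t\<in>I. a t > 0"
    and a_smooth: "smooth_on_real I a"
    and zeta_smooth: "smooth_on_real I zeta"
    and V_smooth: "smooth_on_real I V"
    and gs: "const_curv_riemannian U gs"
    and divfree: "\<forall>x\<in>\<Omega>. \<forall>l. div2 g X x l = 0"
  shows "(\<forall>x\<in>\<Omega>. \<forall>k l. X x k l =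
            2 * (zeta (tcoord x) + 3 * gamma * deriv H (tcoord x)) * u x k * u x l
          + (V (tcoord x) + 3 * gamma * deriv H (tcoord x)) * g x k l)
       \<and> codazzi_on \<Omega> g C
       \<and> (\<forall>x\<in>\<Omega>. \<forall>k l. X x k l = C x k l - g x k l * trace2 g C x)
       \<and> (\<forall>T. (\<forall>x\<in>\<Omega>. \<forall>k l. einstein g x k l = T x k l + X x k l)
              \<longrightarrow> cotton_codazzi_form \<Omega> g T)"
proof -
  interpret frwL I U a gs using I(1) a_pos a_smooth gs by unfold_locales
  define Hd where "Hd = deriv (hubble a)"
  define Af where "Af t = 2 * (zeta t + 3 * gamma * Hd t)" for t
  define BX where "BX t = V t + 3 * gamma * Hd t" for t
  define BC where "BC t = (1/3) * (2 * zeta t - V t + 3 * gamma * Hd t)" for t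
  have OmE: "\<Omega> = Om" unfolding \<Omega>_def ..
  have gE: "g = gm" unfolding g_def ..
  have gradbox: "grad (box gm tcoord) y p = -3 * Hd (tcoord y) * dn p" if y: "y \<in> Om" for y p
  proof -
    have "grad (box gm tcoord) y p = pd (\<lambda>z. -3 * hubble a (tcoord z)) p y"
      unfolding grad_def by (rule pd_cong[OF Om_open y]) (simp add: box_val)
    also have "\<dots> = (-3 * deriv (hubble a) (tcoord y)) * dn p"
      by (rule pd_dl[OF dl_time[OF DERIV_cmult[OF H_deriv[OF Om_t[OF y]]]]])
    finally show ?thesis unfolding Hd_def .
  qed
  have XF: "\<forall>y\<in>Om. \<forall>k l. X y k l = Af (tcoord y) * (dn k * dn l) + BX (tcoord y) * gm y k l"
  proof (intro ballI allI)
    fix y k l assume y: "y \<in> Om"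
    have ss: "(\<Sum>p\<in>UNIV. \<Sum>q\<in>UNIV. ginv gm y p q * (-3 * Hd (tcoord y) * dn p) * dn q) = 3 * Hd (tcoord y)"
      by (simp add: sum_opt ginv_row[OF y])
    show "X y k l = Af (tcoord y) * (dn k * dn l) + BX (tcoord y) * gm y k l"
      unfolding X_def gradbox[OF y] grad_tcoord ss Af_def BX_def by (simp add: algebra_simps)
  qed
  have CF: "\<forall>y\<in>Om. \<forall>k l. C y k l = Af (tcoord y) * (dn k * dn l) + BC (tcoord y) * gm y k l"
    unfolding C_def Af_def BC_def Hd_def by (simp add: algebra_simps)
  have Af_ext: "Af = (\<lambda>t. 2 * (zeta t + 3 * gamma * Hd t))" by (rule ext) (simp add: Af_def)
  have BX_ext: "BX = (\<lambda>t. V t + 3 * gamma * Hd t)" by (rule ext) (simp add: BX_def)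
  have BC_ext: "BC = (\<lambda>t. (1/3) * (2 * zeta t - V t + 3 * gamma * Hd t))" by (rule ext) (simp add: BC_def)
  have dZ: "(zeta has_real_derivative deriv zeta t) (at t)" if "t \<in> I" for t
    using smooth_deriv[OF zeta_smooth that] .
  have dV: "(V has_real_derivative deriv V t) (at t)" if "t \<in> I" for t
    using smooth_deriv[OF V_smooth that] .
  have dH: "(Hd has_real_derivative deriv Hd t) (at t)" if "t \<in> I" for t
    unfolding Hd_def using Hd_deriv[OF that] .
  have dAf: "(Af has_real_derivative 2 * (deriv zeta t + 3 * gamma * deriv Hd t)) (at t)" if "t \<in> I" for t
    unfolding Af_ext by (intro DERIV_cmult DERIV_add dZ[OF that] dH[OF that])
  have dBX: "(BX has_real_derivative deriv V t + 3 * gamma * deriv Hd t) (at t)" if "t \<in> I" for t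
    unfolding BX_ext by (intro DERIV_cmult DERIV_add dV[OF that] dH[OF that])
  have dBC: "(BC has_real_derivative (1/3) * (2 * deriv zeta t - deriv V t + 3 * gamma * deriv Hd t)) (at t)" if "t \<in> I" for t
    unfolding BC_ext by (intro DERIV_cmult DERIV_add DERIV_diff dZ[OF that] dV[OF that] dH[OF that])
  have rel: "(1/3) * (2 * deriv zeta (tcoord x) - deriv V (tcoord x) + 3 * gamma * deriv Hd (tcoord x))
       = - Af (tcoord x) * hubble a (tcoord x)" if x: "x \<in> Om" for x
  proof -
    have "div2 gm X x None = 0" using divfree x unfolding OmE gE by blast
    then have "- (2 * (deriv zeta (tcoord x) + 3 * gamma * deriv Hd (tcoord x)))
        + (deriv V (tcoord x) + 3 * gamma * deriv Hd (tcoord x)) - 3 * Af (tcoord x) * hubble a (tcoord x) = 0"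
      unfolding div_form[OF x XF dAf[OF Om_t[OF x]] dBX[OF Om_t[OF x]]] .
    then show ?thesis by (simp add: algebra_simps)
  qed
  have P1: "\<forall>x\<in>\<Omega>. \<forall>k l. X x k l =
            2 * (zeta (tcoord x) + 3 * gamma * deriv H (tcoord x)) * u x k * u x l
          + (V (tcoord x) + 3 * gamma * deriv H (tcoord x)) * g x k l"
    unfolding OmE gE H_def u_def using XF by (simp add: Af_def BX_def Hd_def algebra_simps)
  have P2: "codazzi_on \<Omega> g C"
    unfolding codazzi_on_def OmE gE
  proof (intro conjI ballI allI)
    fix x k l assume x: "x \<in> Om"
    show "C x k l = C x l k" using CF x gm_sym[OF x, of k l] by (simp add: algebra_simps)
  next
    fix x j k l assume x: "x \<in> Om"
    show "cov2 gm C x j k l = cov2 gm C x k j l"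
      unfolding cov2_form[OF x CF dAf[OF Om_t[OF x]] dBC[OF Om_t[OF x]]] rel[OF x]
      using gm_sym[OF x, of j k] by (simp add: algebra_simps)
  qed
  have P3: "\<forall>x\<in>\<Omega>. \<forall>k l. X x k l = C x k l - g x k l * trace2 g C x"
    unfolding OmE gE
  proof (intro ballI allI)
    fix x k l assume x: "x \<in> Om"
    have tr: "trace2 gm C x = - Af (tcoord x) + 4 * BC (tcoord x)"
      by (rule trace_form[OF x]) (use CF x in blast)
    show "X x k l = C x k l - gm x k l * trace2 gm C x"
    proof -
      have Xx: "X x k l = Af (tcoord x) * (dn k * dn l) + BX (tcoord x) * gm x k l" using XF x by blast
      have Cx: "C x k l = Af (tcoord x) * (dn k * dn l) + BC (tcoord x) * gm x k l" using CF x by blast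
      show ?thesis unfolding tr Xx Cx Af_def BX_def BC_def by (simp add: algebra_simps)
    qed
  qed
  have P4: "\<forall>T. (\<forall>x\<in>\<Omega>. \<forall>k l. einstein g x k l = T x k l + X x k l) \<longrightarrow> cotton_codazzi_form \<Omega> g T"
  proof (intro allI impI)
    fix T assume E: "\<forall>x\<in>\<Omega>. \<forall>k l. einstein g x k l = T x k l + X x k l"
    show "cotton_codazzi_form \<Omega> g T"
      unfolding cotton_codazzi_form_def
      by (rule exI[of _ C]) (use P2 P3 E in auto)
  qed
  show ?thesis using P1 P2 P3 P4 by blast
qed

end
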